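(* Assume (H3) and (H0)–(H2). Let $u\in USC(\mathbb T^N;\mathbb R^m)$ be a bounded viscosity subsolution and $v\in LSC(\mathbb T^N;\mathbb R^m)$ a bounded viscosity supersolution of the stationary system (S). Suppose that one of the following holds: (i) (classical case) $\sum_{j=1}^m d_{ij}(x)>0$ for all $x\in\mathbb T^N$ and all $1\le i\le m$; (ii) (degenerate case) $D(x)$ is irreducible for every $x\in\mathbb T^N$, and there exists a function $\Lambda:\mathcal A\to\mathbb R^m$ with $\Lambda\ge 0$ and $\sum_i\Lambda_i>0$ on $\mathcal A$ such that $\sum_{i=1}^m\Lambda_i(x)u_i(x)\le\sum_{i=1}^m\Lambda_i(x)v_i(x)$ for all $x\in\mathcal A$. Then $u\le v$ in $\mathbb T^N$ (componentwise).
   Context: $\mathbb T^N=\mathbb R^N/\mathbb Z^N$; $D(x)=(d_{ij}(x))_{1\le i,j\le m}$. (H3): each $d_{ij}:\mathbb T^N\to\mathbb R$ is continuous and for all $x$: $d_{ii}(x)\ge0$, $d_{ij}(x)\le0$ for $i\ne j$, $\sum_j d_{ij}(x)\ge0$. Irreducible: for every proper subset $\mathcal I\subsetneq\{1,\dots,m\}$ there exist $i\in\mathcal I$, $j\notin\mathcal I$ with $d_{ij}(x)\ne0$. Hamiltonians $H_i(x,p)=F_i(x,p)-f_i(x)$, $i=1,\dots,m$, where (H0) $f_i$ and $F_i$ are continuous and $1$-periodic in $x$; (H1) $F_i(x,\cdot)$ is convex and coercive ($\inf_x F_i(x,p)\to+\infty$ as $|p|\to\infty$) and $F_i(x,p)\ge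 F_i(x,0)=0$ for all $x,p$; (H2) $f_i\ge 0$. Sets: $\mathcal F=\{x:\sum_i f_i(x)=0\}$, $\mathcal D_i=\{x:\sum_j d_{ij}(x)=0\}$, $\mathcal A=\mathcal F\cap\bigcap_{i=1}^m\mathcal D_i$. Stationary system (S): $H_i(x,Du_i)+\sum_{j=1}^m d_{ij}(x)u_j=0$ in $\mathbb T^N$, $1\le i\le m$. An USC $u:\mathbb T^N\to\mathbb R^m$ is a viscosity subsolution of (S) if whenever $\phi\in C^1$, $i\in\{1,\dots,m\}$ and $u_i-\phi$ has a local maximum at $x$, then $H_i(x,D\phi(x))+\sum_j d_{ij}(x)u_j(x)\le0$; an LSC $v$ is a supersolution if whenever $v_i-\phi$ has a local minimum at $x$, then $H_i(x,D\phi(x))+\sum_j d_{ij}(x)v_j(x)\ge0$; a solution is a continuous function that is both. *)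

theory Defs
  imports "HOL-Analysis.Analysis"
begin

text \<open>The torus T^N = R^N / Z^N is modelled by Z^N-periodic functions on R^N,
  with R^N = real^'n.  The index set {1..m} is modelled by a finite type 'm.\<close>

definition periodic :: "(real^'n \<Rightarrow> 'b) \<Rightarrow> bool" where
  "periodic g \<longleftrightarrow> (\<forall>x (k::'n \<Rightarrow> int). g (x + (\<chi> i. of_int (k i))) = g x)"

definition usc :: "(real^'n \<Rightarrow> real) \<Rightarrow> bool" where
  "usc g \<longleftrightarrow> (\<forall>x e. e > 0 \<longrightarrow> (\<exists>d>0. \<forall>y. dist y x < d \<longrightarrow> g y < g x + e))"

definition lsc :: "(real^'n \<Rightarrow> real) \<Rightarrow> bool" where
  "lsc g \<longleftrightarrow> (\<forall>x e. e > 0 \<longrightarrow> (\<exists>d>0. \<forall>y. dist y x < d \<longrightarrow> g x - e < g y))"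

definition C1_grad :: "(real^'n \<Rightarrow> real) \<Rightarrow> (real^'n \<Rightarrow> real^'n) \<Rightarrow> bool" where
  "C1_grad phi Dphi \<longleftrightarrow> (\<forall>x. (phi has_derivative (\<lambda>h. Dphi x \<bullet> h)) (at x)) \<and> continuous_on UNIV Dphi"

definition loc_max :: "(real^'n \<Rightarrow> real) \<Rightarrow> real^'n \<Rightarrow> bool" where
  "loc_max g x \<longleftrightarrow> (\<exists>e>0. \<forall>y. dist y x < e \<longrightarrow> g y \<le> g x)"

definition loc_min :: "(real^'n \<Rightarrow> real) \<Rightarrow> real^'n \<Rightarrow> bool" where
  "loc_min g x \<longleftrightarrow> (\<exists>e>0. \<forall>y. dist y x < e \<longrightarrow> g x \<le> g y)"

definition Ham :: "('m \<Rightarrow> real^'n \<Rightarrow> real^'n \<Rightarrow> real) \<Rightarrow> ('m \<Rightarrow> real^'n \<Rightarrow> real)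
    \<Rightarrow> 'm \<Rightarrow> real^'n \<Rightarrow> real^'n \<Rightarrow> real" where
  "Ham F f i x p = F i x p - f i x"

definition visc_subsol ::
  "('m::finite \<Rightarrow> real^'n \<Rightarrow> real^'n \<Rightarrow> real) \<Rightarrow> ('m \<Rightarrow> real^'n \<Rightarrow> real)
   \<Rightarrow> ('m \<Rightarrow> 'm \<Rightarrow> real^'n \<Rightarrow> real) \<Rightarrow> (real^'n \<Rightarrow> real^'m) \<Rightarrow> bool" where
  "visc_subsol F f d u \<longleftrightarrow> (\<forall>i. usc (\<lambda>x. u x $ i)) \<and>
     (\<forall>phi Dphi i x. C1_grad phi Dphi \<longrightarrow> loc_max (\<lambda>y. u y $ i - phi y) x \<longrightarrow>
        Ham F f i x (Dphi x) + (\<Sum>j\<in>UNIV. d i j x * u x $ j) \<le> 0)"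

definition visc_supersol ::
  "('m::finite \<Rightarrow> real^'n \<Rightarrow> real^'n \<Rightarrow> real) \<Rightarrow> ('m \<Rightarrow> real^'n \<Rightarrow> real)
   \<Rightarrow> ('m \<Rightarrow> 'm \<Rightarrow> real^'n \<Rightarrow> real) \<Rightarrow> (real^'n \<Rightarrow> real^'m) \<Rightarrow> bool" where
  "visc_supersol F f d v \<longleftrightarrow> (\<forall>i. lsc (\<lambda>x. v x $ i)) \<and>
     (\<forall>phi Dphi i x. C1_grad phi Dphi \<longrightarrow> loc_min (\<lambda>y. v y $ i - phi y) x \<longrightarrow>
        Ham F f i x (Dphi x) + (\<Sum>j\<in>UNIV. d i j x * v x $ j) \<ge> 0)"

definition irreducible_at :: "('m \<Rightarrow> 'm \<Rightarrow> real^'n \<Rightarrow> real) \<Rightarrow> real^'n \<Rightarrow> bool" where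
  "irreducible_at d x \<longleftrightarrow> (\<forall>I. I \<noteq> {} \<and> I \<noteq> UNIV \<longrightarrow> (\<exists>i\<in>I. \<exists>j. j \<notin> I \<and> d i j x \<noteq> 0))"

definition setF :: "('m::finite \<Rightarrow> real^'n \<Rightarrow> real) \<Rightarrow> (real^'n) set" where
  "setF f = {x. (\<Sum>i\<in>UNIV. f i x) = 0}"

definition setD :: "('m::finite \<Rightarrow> 'm \<Rightarrow> real^'n \<Rightarrow> real) \<Rightarrow> 'm \<Rightarrow> (real^'n) set" where
  "setD d i = {x. (\<Sum>j\<in>UNIV. d i j x) = 0}"

definition setA :: "('m::finite \<Rightarrow> real^'n \<Rightarrow> real) \<Rightarrow> ('m \<Rightarrow> 'm \<Rightarrow> real^'n \<Rightarrow> real) \<Rightarrow> (real^'n) set" where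
  "setA f d = setF f \<inter> (\<Inter>i. setD d i)"

end

theory Submission
  imports Defs
begin


lemma usc_max:
  fixes g :: "'a::metric_space \<Rightarrow> real"
  assumes K: "compact K" "K \<noteq> {}"
    and U: "\<forall>x\<in>K. \<forall>e>0. \<exists>d>0. \<forall>y\<in>K. dist y x < d \<longrightarrow> g y < g x + e"
  shows "\<exists>x\<in>K. \<forall>y\<in>K. g y \<le> g x"
proof (rule ccontr)
  assume "\<not> ?thesis"
  then have "\<forall>x\<in>K. \<exists>y\<in>K. g y > g x" by (auto simp: not_le)
  then obtain Y where Y: "\<And>x. x \<in> K \<Longrightarrow> Y x \<in> K \<and> g (Y x) > g x" by metis
  define V where "V x = \<Union>{ball z d | z d. d > 0 \<and> (\<forall>w\<in>K. dist w z < d \<longrightarrow> g w < g (Y x))}" for x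
  have opn: "open (V x)" for x unfolding V_def by auto
  have sub: "K \<inter> V x \<subseteq> {w. g w < g (Y x)}" for x
    unfolding V_def by (auto simp: dist_commute)
  have cov: "K \<subseteq> (\<Union>x\<in>K. V x)"
  proof
    fix x assume x: "x \<in> K"
    have "g (Y x) - g x > 0" using Y[OF x] by simp
    then obtain d where d: "d > 0" "\<forall>y\<in>K. dist y x < d \<longrightarrow> g y < g x + (g (Y x) - g x)"
      using U x by blast
    then have "x \<in> ball x d \<and> ball x d \<in> {ball z d | z d. d > 0 \<and> (\<forall>w\<in>K. dist w z < d \<longrightarrow> g w < g (Y x))}" by auto
    then have "x \<in> V x" unfolding V_def by blast
    then show "x \<in> (\<Union>x\<in>K. V x)" using x by blast
  qed
  obtain C where C: "C \<subseteq> K" "finite C" "K \<subseteq> (\<Union>c\<in>C. V c)"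
    using compactE_image[OF K(1) opn cov] by blast
  have "C \<noteq> {}" using C K(2) by auto
  define m where "m = Max ((\<lambda>c. g (Y c)) ` C)"
  have "m \<in> (\<lambda>c. g (Y c)) ` C"
    using Max_in[of "(\<lambda>c. g (Y c)) ` C"] C(2) \<open>C \<noteq> {}\<close> unfolding m_def by auto
  then obtain c0 where c0: "c0 \<in> C" "m = g (Y c0)" by auto
  have "Y c0 \<in> K" using Y c0 C by auto
  then obtain c where c: "c \<in> C" "Y c0 \<in> V c" using C(3) by auto
  then have "g (Y c0) < g (Y c)" using sub \<open>Y c0 \<in> K\<close> by auto
  moreover have "g (Y c) \<le> m" unfolding m_def using c C(2) by auto
  ultimately show False using c0 by simp
qed



lemma C1_quad:
  fixes y z :: "real^'n"
  shows "C1_grad (\<lambda>x. a + b * ((x - y) \<bullet> (x - y)) + e * ((x - z) \<bullet> (x - z)))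
                 (\<lambda>x. (2 * b) *\<^sub>R (x - y) + (2 * e) *\<^sub>R (x - z))"
  unfolding C1_grad_def
proof (intro conjI allI)
  fix x :: "real^'n"
  show "((\<lambda>x. a + b * ((x - y) \<bullet> (x - y)) + e * ((x - z) \<bullet> (x - z))) has_derivative
         (\<lambda>h. ((2 * b) *\<^sub>R (x - y) + (2 * e) *\<^sub>R (x - z)) \<bullet> h)) (at x)"
    apply (rule derivative_eq_intros refl | simp)+
    apply (simp add: algebra_simps inner_commute)
    done
next
  show "continuous_on UNIV (\<lambda>x. (2 * b) *\<^sub>R (x - y) + (2 * e) *\<^sub>R (x - z))"
    by (intro continuous_intros)
qed

lemma usc_ev:
  assumes "usc g" "(X \<longlongrightarrow> z) F" "e > 0"
  shows "eventually (\<lambda>n. g (X n) < g z + e) F"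
proof -
  obtain d where d: "d > 0" "\<forall>y. dist y z < d \<longrightarrow> g y < g z + e" using assms(1,3) unfolding usc_def by blast
  have "eventually (\<lambda>n. dist (X n) z < d) F" using assms(2) d(1) tendsto_iff by blast
  then show ?thesis by eventually_elim (use d in auto)
qed

lemma lsc_ev:
  assumes "lsc g" "(X \<longlongrightarrow> z) F" "e > 0"
  shows "eventually (\<lambda>n. g z - e < g (X n)) F"
proof -
  obtain d where d: "d > 0" "\<forall>y. dist y z < d \<longrightarrow> g z - e < g y" using assms(1,3) unfolding lsc_def by blast
  have "eventually (\<lambda>n. dist (X n) z < d) F" using assms(2) d(1) tendsto_iff by blast
  then show ?thesis by eventually_elim (use d in auto)
qed



lemma sq_small:
  fixes a :: "nat \<Rightarrow> 'b::real_normed_vector"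
  assumes "\<And>n. (norm (a n))\<^sup>2 \<le> C / (real n + 1)"
  shows "(a \<longlongrightarrow> 0) sequentially"
proof (rule tendstoI)
  fix e :: real assume e: "e > 0"
  obtain N where N: "C / e\<^sup>2 < real N" using reals_Archimedean2 by blast
  have "eventually (\<lambda>n. n \<ge> N) sequentially" by (rule eventually_ge_at_top)
  then show "eventually (\<lambda>n. dist (a n) 0 < e) sequentially"
  proof eventually_elim
    case (elim n)
    have "C < e\<^sup>2 * real N" using N e by (simp add: field_simps)
    also have "\<dots> \<le> e\<^sup>2 * (real n + 1)" using elim e by (intro mult_left_mono) auto
    finally have "C / (real n + 1) < e\<^sup>2" by (simp add: field_simps)
    then have "(norm (a n))\<^sup>2 < e\<^sup>2" using assms[of n] by linarith
    then have "norm (a n) < e" using e by (simp add: power_less_imp_less_base)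
    then show ?case by simp
  qed
qed



lemma key:
  fixes F :: "'m::finite \<Rightarrow> real^'n \<Rightarrow> real^'n \<Rightarrow> real"
    and f :: "'m \<Rightarrow> real^'n \<Rightarrow> real"
    and d :: "'m \<Rightarrow> 'm \<Rightarrow> real^'n \<Rightarrow> real"
    and u v :: "real^'n \<Rightarrow> real^'m"
  assumes dcont: "\<And>i j. continuous_on UNIV (d i j)"
    and diag: "\<And>i x. d i i x \<ge> 0"
    and off: "\<And>i j x. i \<noteq> j \<Longrightarrow> d i j x \<le> 0"
    and fcont: "\<And>i. continuous_on UNIV (f i)"
    and Fcont: "\<And>i. continuous_on UNIV (\<lambda>(x, p). F i x p)"
    and conv: "\<And>i x. convex_on UNIV (F i x)"
    and coer: "\<And>i M. \<exists>R. \<forall>x p. norm p \<ge> R \<longrightarrow> F i x p \<ge> M"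
    and F0: "\<And>i x. F i x 0 = 0"
    and ubd: "bounded (range u)" and vbd: "bounded (range v)"
    and sub: "visc_subsol F f d u"
    and sup: "visc_supersol F f d v"
    and mu: "0 < \<mu>" "\<mu> \<le> 1"
    and mx: "\<And>x k. \<mu> * u x $ k - v x $ k \<le> \<mu> * u x0 $ j - v x0 $ j"
  shows "(\<Sum>k\<in>UNIV. d j k x0 * (\<mu> * u x0 $ k - v x0 $ k)) + (1 - \<mu>) * f j x0 \<le> 0"
proof -
  obtain Bu where Bu: "\<And>x. norm (u x) \<le> Bu" using ubd unfolding bounded_iff by auto
  obtain Bv where Bv: "\<And>x. norm (v x) \<le> Bv" using vbd unfolding bounded_iff by auto
  define B where "B = max 0 (max Bu Bv)"
  have B0: "B \<ge> 0" unfolding B_def by simp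
  have Bu': "\<bar>u x $ k\<bar> \<le> B" for x k
    using component_le_norm_cart[of "u x" k] Bu[of x] unfolding B_def by linarith
  have Bv': "\<bar>v x $ k\<bar> \<le> B" for x k
    using component_le_norm_cart[of "v x" k] Bv[of x] unfolding B_def by linarith
  have Bmu: "\<bar>\<mu> * u x $ k\<bar> \<le> B" for x k
  proof -
    have "\<bar>\<mu> * u x $ k\<bar> = \<mu> * \<bar>u x $ k\<bar>" using mu by (simp add: abs_mult)
    also have "\<dots> \<le> 1 * B" using mu Bu'[of x k] by (intro mult_mono) auto
    finally show ?thesis by simp
  qed
  define M where "M = \<mu> * u x0 $ j - v x0 $ j"
  have Mlow: "M \<ge> - 2 * B" using Bmu[of x0 j] Bv'[of x0 j] unfolding M_def by linarith
  define R0 where "R0 = 4 * B + 1"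
  have R0: "R0 \<ge> 1" "R0 * R0 \<ge> 4 * B + 1" using B0 unfolding R0_def by (auto simp: algebra_simps)
  define \<Phi> where "\<Phi> n x y = \<mu> * u x $ j - v y $ j - (real n + 1) * ((x - y) \<bullet> (x - y)) - (x - x0) \<bullet> (x - x0)"
    for n x y
  have \<Phi>x0: "\<Phi> n x0 x0 = M" for n unfolding \<Phi>_def M_def by simp
  have maxex: "\<exists>X Y. X \<in> cball x0 R0 \<and> Y \<in> cball x0 (2*R0) \<and> (\<forall>x y. \<Phi> n x y \<le> \<Phi> n X Y)" for n
  proof -
    define K where "K = cball x0 R0 \<times> cball x0 (2*R0)"
    define Q where "Q p = (real n + 1) * ((fst p - snd p) \<bullet> (fst p - snd p)) + (fst p - x0) \<bullet> (fst p - x0)"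
      for p :: "(real^'n) \<times> (real^'n)"
    define g where "g p = \<Phi> n (fst p) (snd p)" for p
    have gQ: "g p = \<mu> * u (fst p) $ j - v (snd p) $ j - Q p" for p
      unfolding g_def Q_def \<Phi>_def by simp
    have cq: "continuous_on UNIV Q" unfolding Q_def by (intro continuous_intros)
    have usc: "\<forall>p\<in>K. \<forall>e>0. \<exists>dd>0. \<forall>q\<in>K. dist q p < dd \<longrightarrow> g q < g p + e"
    proof (intro ballI allI impI)
      fix p and e :: real assume p: "p \<in> K" and e: "e > 0"
      have e3: "e / 3 > 0" using e by simp
      obtain d1 where d1: "d1>0" "\<forall>y. dist y (fst p) < d1 \<longrightarrow> u y $ j < u (fst p) $ j + e/3"
        using sub e3 unfolding visc_subsol_def usc_def by blast
      obtain d2 where d2: "d2>0" "\<forall>y. dist y (snd p) < d2 \<longrightarrow> v (snd p) $ j - e/3 < v y $ j"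
        using sup e3 unfolding visc_supersol_def lsc_def by blast
      obtain d3 where d3: "d3>0" "\<forall>q. dist q p < d3 \<longrightarrow> dist (Q q) (Q p) < e/3"
        using cq e3 unfolding continuous_on_iff by blast
      show "\<exists>dd>0. \<forall>q\<in>K. dist q p < dd \<longrightarrow> g q < g p + e"
      proof (intro exI[of _ "min d1 (min d2 d3)"] conjI ballI impI)
        show "min d1 (min d2 d3) > 0" using d1 d2 d3 by simp
        fix q assume "q \<in> K" "dist q p < min d1 (min d2 d3)"
        then have q: "dist (fst q) (fst p) < d1" "dist (snd q) (snd p) < d2" "dist q p < d3"
          using dist_fst_le[of q p] dist_snd_le[of q p] by auto
        have h1: "u (fst q) $ j < u (fst p) $ j + e/3" using d1 q by blast
        have "\<mu> * u (fst q) $ j \<le> \<mu> * (u (fst p) $ j + e/3)" using h1 mu by (intro mult_left_mono) auto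
        also have "\<dots> \<le> \<mu> * u (fst p) $ j + e/3" using mu e by (simp add: algebra_simps mult_left_le_one_le)
        finally have h1': "\<mu> * u (fst q) $ j \<le> \<mu> * u (fst p) $ j + e/3" .
        have h2: "v (snd p) $ j - e/3 < v (snd q) $ j" using d2 q by blast
        have "dist (Q q) (Q p) < e/3" using d3(2) q(3) by blast
        then have h3: "\<bar>Q q - Q p\<bar> < e/3" by (simp add: dist_real_def)
        show "g q < g p + e" unfolding gQ using h1' h2 h3 by linarith
      qed
    qed
    have Kc: "compact K" unfolding K_def by (intro compact_Times compact_cball)
    have Kne: "(x0, x0) \<in> K" unfolding K_def using R0 by auto
    obtain p where p: "p \<in> K" "\<forall>q\<in>K. g q \<le> g p" using usc_max[OF Kc _ usc] Kne by blast
    have outside: "\<Phi> n x y < - 2 * B" if "(x, y) \<notin> K" for x y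
    proof -
      have ub: "\<Phi> n x y \<le> 2 * B - (real n + 1) * ((x - y) \<bullet> (x - y)) - (x - x0) \<bullet> (x - x0)"
        using Bmu[of x j] Bv'[of y j] unfolding \<Phi>_def by linarith
      have e1: "(x - y) \<bullet> (x - y) = (dist x y)\<^sup>2" by (simp add: dist_norm power2_norm_eq_inner)
      have e2: "(x - x0) \<bullet> (x - x0) = (dist x0 x)\<^sup>2"
        by (metis dist_commute dist_norm power2_norm_eq_inner)
      show ?thesis
      proof (cases "dist x0 x > R0")
        case True
        then have "R0 * R0 < dist x0 x * dist x0 x" using R0 by (intro mult_strict_mono) auto
        then have "(x - x0) \<bullet> (x - x0) > 4 * B" using R0 e2 by (simp add: power2_eq_square)
        moreover have "(real n + 1) * ((x - y) \<bullet> (x - y)) \<ge> 0" by simp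
        ultimately show ?thesis using ub by linarith
      next
        case False
        then have "dist x0 y > 2 * R0" using that unfolding K_def by auto
        moreover have "dist x0 y \<le> dist x0 x + dist x y" by (rule dist_triangle)
        ultimately have dxy: "dist x y > R0" using False by linarith
        then have "R0 * R0 < dist x y * dist x y" using R0 by (intro mult_strict_mono) auto
        then have z: "(x - y) \<bullet> (x - y) > 4 * B" using R0 e1 by (simp add: power2_eq_square)
        have "(real n + 1) * ((x - y) \<bullet> (x - y)) \<ge> 1 * ((x - y) \<bullet> (x - y))"
          by (intro mult_right_mono) auto
        moreover have "(x - x0) \<bullet> (x - x0) \<ge> 0" by simp
        ultimately show ?thesis using ub z by linarith
      qed
    qed
    show ?thesis
    proof (intro exI conjI allI)
      show "fst p \<in> cball x0 R0" "snd p \<in> cball x0 (2*R0)" using p(1) unfolding K_def by auto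
      fix x y
      show "\<Phi> n x y \<le> \<Phi> n (fst p) (snd p)"
      proof (cases "(x, y) \<in> K")
        case True then show ?thesis using p(2) unfolding g_def by fastforce
      next
        case False
        have "g (x0, x0) \<le> g p" using p(2) Kne by blast
        then have "M \<le> \<Phi> n (fst p) (snd p)" using \<Phi>x0 unfolding g_def by simp
        then show ?thesis using outside[OF False] Mlow by linarith
      qed
    qed
  qed
  then obtain X Y where XY: "\<And>n. X n \<in> cball x0 R0" "\<And>n. Y n \<in> cball x0 (2*R0)"
     "\<And>n x y. \<Phi> n x y \<le> \<Phi> n (X n) (Y n)"
    by metis
  have A1: "\<mu> * u (X n) $ j - v (Y n) $ j \<ge> M + (real n + 1) * ((X n - Y n) \<bullet> (X n - Y n)) + (X n - x0) \<bullet> (X n - x0)" for n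
    using XY(3)[of n x0 x0] \<Phi>x0[of n] unfolding \<Phi>_def by linarith
  have A2: "(norm (X n - Y n))\<^sup>2 \<le> 4 * B / (real n + 1)" for n
  proof -
    have "(real n + 1) * ((X n - Y n) \<bullet> (X n - Y n)) \<le> 4 * B"
      using A1[of n] Mlow Bmu[of "X n" j] Bv'[of "Y n" j] inner_ge_zero[of "X n - x0"] by linarith
    then show ?thesis by (simp add: power2_norm_eq_inner field_simps)
  qed
  have Xbd: "bounded (range X)" using XY(1) by (intro bounded_subset[OF bounded_cball[of x0 R0]]) auto
  obtain z r where r: "strict_mono r" and Xz: "((X \<circ> r) \<longlongrightarrow> z) sequentially"
    using bounded_imp_convergent_subsequence[OF Xbd] by blast
  define X' where "X' n = X (r n)" for n
  define Y' where "Y' n = Y (r n)" for n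
  have XY0: "((\<lambda>n. X' n - Y' n) \<longlongrightarrow> 0) sequentially"
  proof (rule sq_small[where C="4*B"])
    fix n
    have "(norm (X' n - Y' n))\<^sup>2 \<le> 4*B/(real (r n) + 1)" using A2 unfolding X'_def Y'_def by blast
    also have "\<dots> \<le> 4*B/(real n + 1)" using seq_suble[OF r, of n] B0 by (intro divide_left_mono) auto
    finally show "(norm (X' n - Y' n))\<^sup>2 \<le> 4*B/(real n + 1)" .
  qed
  have "X' = X \<circ> r" unfolding X'_def by auto
  then have X'z: "(X' \<longlongrightarrow> z) sequentially" using Xz by simp
  have Y'z: "(Y' \<longlongrightarrow> z) sequentially"
  proof -
    have "((\<lambda>n. X' n - (X' n - Y' n)) \<longlongrightarrow> z - 0) sequentially" by (intro tendsto_diff X'z XY0)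
    then show ?thesis by simp
  qed
  have A1': "\<mu> * u (X' n) $ j - v (Y' n) $ j \<ge> M + (X' n - x0) \<bullet> (X' n - x0)" for n
  proof -
    have "(real (r n) + 1) * ((X' n - Y' n) \<bullet> (X' n - Y' n)) \<ge> 0" by simp
    then show ?thesis using A1[of "r n"] unfolding X'_def Y'_def by linarith
  qed
  have usub: "usc (\<lambda>x. u x $ k)" for k using sub unfolding visc_subsol_def by blast
  have vsup: "lsc (\<lambda>x. v x $ k)" for k using sup unfolding visc_supersol_def by blast
  have muu: "\<mu> * u x $ k \<le> \<mu> * u y $ k + e" if "u x $ k < u y $ k + e" "e > 0" for x y k e
  proof -
    have "\<mu> * u x $ k \<le> \<mu> * (u y $ k + e)" using that mu by (intro mult_left_mono) auto
    also have "\<dots> \<le> \<mu> * u y $ k + e" using mu that by (simp add: algebra_simps mult_left_le_one_le)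
    finally show ?thesis .
  qed
  have z0: "z = x0"
  proof -
    have ze: "(z - x0) \<bullet> (z - x0) \<le> 2 * e" if e: "e > 0" for e
    proof -
      have ev1: "eventually (\<lambda>n. u (X' n) $ j < u z $ j + e) sequentially"
        using usc_ev[OF usub X'z e] by simp
      have ev2: "eventually (\<lambda>n. v z $ j - e < v (Y' n) $ j) sequentially"
        using lsc_ev[OF vsup Y'z e] by simp
      have "eventually (\<lambda>n. (X' n - x0) \<bullet> (X' n - x0) \<le> 2 * e) sequentially"
        using ev1 ev2
      proof eventually_elim
        case (elim n)
        have "\<mu> * u (X' n) $ j \<le> \<mu> * u z $ j + e" using muu[OF elim(1) e] .
        moreover have "\<mu> * u z $ j - v z $ j \<le> M" using mx[of z j] unfolding M_def .
        ultimately show ?case using A1'[of n] elim(2) by linarith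
      qed
      moreover have "((\<lambda>n. (X' n - x0) \<bullet> (X' n - x0)) \<longlongrightarrow> (z - x0) \<bullet> (z - x0)) sequentially"
        by (intro tendsto_intros X'z)
      ultimately show ?thesis
        using tendsto_le[OF trivial_limit_sequentially tendsto_const] by blast
    qed
    have "(z - x0) \<bullet> (z - x0) \<le> 0"
    proof (rule field_le_epsilon)
      fix e :: real assume "e > 0"
      then show "(z - x0) \<bullet> (z - x0) \<le> 0 + e" using ze[of "e/2"] by simp
    qed
    then have "(z - x0) \<bullet> (z - x0) = 0" using inner_ge_zero[of "z - x0"] by linarith
    then show ?thesis by simp
  qed
  have X'x0: "(X' \<longlongrightarrow> x0) sequentially" using X'z z0 by simp
  have Y'x0: "(Y' \<longlongrightarrow> x0) sequentially" using Y'z z0 by simp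
  define G where "G n = (2 * ((real n + 1) / \<mu>)) *\<^sub>R (X n - Y n) + (2 * (1 / \<mu>)) *\<^sub>R (X n - x0)" for n
  define P where "P n = (2 * (real n + 1)) *\<^sub>R (X n - Y n)" for n
  define Qv where "Qv n = 2 *\<^sub>R (X n - x0)" for n
  have S: "F j (X n) (G n) - f j (X n) + (\<Sum>k\<in>UNIV. d j k (X n) * u (X n) $ k) \<le> 0" for n
  proof -
    let ?phi = "\<lambda>x. v (Y n) $ j / \<mu> + ((real n + 1) / \<mu>) * ((x - Y n) \<bullet> (x - Y n)) + (1 / \<mu>) * ((x - x0) \<bullet> (x - x0))"
    have c1: "C1_grad ?phi (\<lambda>x. (2 * ((real n + 1) / \<mu>)) *\<^sub>R (x - Y n) + (2 * (1 / \<mu>)) *\<^sub>R (x - x0))"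
      by (rule C1_quad)
    have eq: "u x $ j - ?phi x = \<Phi> n x (Y n) / \<mu>" for x
      unfolding \<Phi>_def using mu by (simp add: field_simps)
    have lm: "loc_max (\<lambda>y. u y $ j - ?phi y) (X n)"
      unfolding loc_max_def eq
      using XY(3)[of n _ "Y n"] mu by (intro exI[of _ 1]) (auto intro: divide_right_mono)
    from sub c1 lm have "Ham F f j (X n) (G n) + (\<Sum>k\<in>UNIV. d j k (X n) * u (X n) $ k) \<le> 0"
      unfolding visc_subsol_def G_def by blast
    then show ?thesis unfolding Ham_def by simp
  qed
  have isym: "(a - b) \<bullet> (a - b) = (b - a) \<bullet> (b - a)" for a b :: "real^'n"
    by (simp add: inner_diff_left inner_diff_right inner_commute)
  have Pn: "F j (Y n) (P n) - f j (Y n) + (\<Sum>k\<in>UNIV. d j k (Y n) * v (Y n) $ k) \<ge> 0" for n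
  proof -
    let ?psi = "\<lambda>y. (\<mu> * u (X n) $ j - (X n - x0) \<bullet> (X n - x0)) + (- (real n + 1)) * ((y - X n) \<bullet> (y - X n)) + 0 * ((y - X n) \<bullet> (y - X n))"
    have c1: "C1_grad ?psi (\<lambda>y. (2 * (- (real n + 1))) *\<^sub>R (y - X n) + (2 * 0) *\<^sub>R (y - X n))"
      by (rule C1_quad)
    have eq: "v y $ j - ?psi y = - \<Phi> n (X n) y" for y
      unfolding \<Phi>_def using isym[of "X n" y] by (simp add: algebra_simps)
    have lm: "loc_min (\<lambda>y. v y $ j - ?psi y) (Y n)"
      unfolding loc_min_def eq
      using XY(3)[of n "X n"] by (intro exI[of _ 1]) auto
    from sup c1 lm have "Ham F f j (Y n) ((2 * (- (real n + 1))) *\<^sub>R (Y n - X n) + (2 * 0) *\<^sub>R (Y n - X n))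
       + (\<Sum>k\<in>UNIV. d j k (Y n) * v (Y n) $ k) \<ge> 0"
      unfolding visc_supersol_def by blast
    moreover have "(2 * (- (real n + 1))) *\<^sub>R (Y n - X n) + (2 * 0) *\<^sub>R (Y n - X n) = P n"
      unfolding P_def by (simp add: algebra_simps)
    ultimately show ?thesis unfolding Ham_def by simp
  qed
  have GPQ: "\<mu> *\<^sub>R G n = P n + Qv n" for n
    unfolding G_def P_def Qv_def using mu by (simp add: scaleR_add_right)
  have convx: "F j (X n) (P n + Qv n) \<le> \<mu> * F j (X n) (G n)" for n
    using convex_onD[OF conv, of \<mu> 0 "G n"] mu F0 GPQ[of n] by simp
  have E: "F j (X n) (P n + Qv n) - F j (Y n) (P n) + (f j (Y n) - \<mu> * f j (X n))
      + (\<Sum>k\<in>UNIV. \<mu> * d j k (X n) * u (X n) $ k - d j k (Y n) * v (Y n) $ k) \<le> 0" for n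
  proof -
    have "\<mu> * (F j (X n) (G n) - f j (X n) + (\<Sum>k\<in>UNIV. d j k (X n) * u (X n) $ k)) \<le> 0"
      using S[of n] mu by (simp add: mult_nonneg_nonpos)
    moreover have "(\<Sum>k\<in>UNIV. \<mu> * d j k (X n) * u (X n) $ k - d j k (Y n) * v (Y n) $ k)
       = \<mu> * (\<Sum>k\<in>UNIV. d j k (X n) * u (X n) $ k) - (\<Sum>k\<in>UNIV. d j k (Y n) * v (Y n) $ k)"
      by (simp add: sum_subtractf sum_distrib_left mult.assoc)
    ultimately show ?thesis using convx[of n] Pn[of n] by (simp add: algebra_simps)
  qed
  have cC: "continuous_on UNIV (\<lambda>x. f j x + (\<Sum>k\<in>UNIV. \<bar>d j k x\<bar>) * B)"
    by (intro continuous_intros fcont dcont)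
  have "compact ((\<lambda>x. f j x + (\<Sum>k\<in>UNIV. \<bar>d j k x\<bar>) * B) ` cball x0 R0)"
    by (intro compact_continuous_image continuous_on_subset[OF cC] compact_cball) auto
  then have "bounded ((\<lambda>x. f j x + (\<Sum>k\<in>UNIV. \<bar>d j k x\<bar>) * B) ` cball x0 R0)"
    by (rule compact_imp_bounded)
  then obtain C1 where C1': "\<forall>y\<in>(\<lambda>x. f j x + (\<Sum>k\<in>UNIV. \<bar>d j k x\<bar>) * B) ` cball x0 R0. norm y \<le> C1"
    unfolding bounded_iff by blast
  have C1: "f j x + (\<Sum>k\<in>UNIV. \<bar>d j k x\<bar>) * B \<le> C1" if "x \<in> cball x0 R0" for x
  proof -
    have "norm (f j x + (\<Sum>k\<in>UNIV. \<bar>d j k x\<bar>) * B) \<le> C1" using C1' that by blast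
    then show ?thesis by simp
  qed
  have Gb: "F j (X n) (G n) \<le> C1" for n
  proof -
    have "- (\<Sum>k\<in>UNIV. d j k (X n) * u (X n) $ k) \<le> (\<Sum>k\<in>UNIV. \<bar>d j k (X n) * u (X n) $ k\<bar>)"
      using sum_abs[of "\<lambda>k. d j k (X n) * u (X n) $ k" UNIV] by linarith
    also have "\<dots> \<le> (\<Sum>k\<in>UNIV. \<bar>d j k (X n)\<bar> * B)"
      by (intro sum_mono) (simp add: abs_mult mult_left_mono Bu')
    also have "\<dots> = (\<Sum>k\<in>UNIV. \<bar>d j k (X n)\<bar>) * B" by (simp add: sum_distrib_right)
    finally show ?thesis using S[of n] C1[OF XY(1)[of n]] by linarith
  qed
  obtain R where R: "\<And>x p. norm p \<ge> R \<Longrightarrow> F j x p \<ge> C1 + 1" using coer by blast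
  have normG: "norm (G n) < R" for n
  proof (rule ccontr)
    assume "\<not> norm (G n) < R"
    then have "F j (X n) (G n) \<ge> C1 + 1" using R by simp
    then show False using Gb[of n] by simp
  qed
  have normPQ: "norm (P n + Qv n) \<le> R" for n
  proof -
    have "norm (P n + Qv n) = \<mu> * norm (G n)" using GPQ[of n, symmetric] mu by simp
    also have "\<dots> \<le> 1 * norm (G n)" using mu by (intro mult_right_mono) auto
    finally show ?thesis using normG[of n] by simp
  qed
  have normQ: "norm (Qv n) \<le> 2 * R0" for n
    using XY(1)[of n] unfolding Qv_def by (simp add: dist_norm norm_minus_commute)
  have normP: "norm (P n) \<le> R + 2 * R0" for n
  proof -
    have "norm (P n) = norm ((P n + Qv n) - Qv n)" by simp
    also have "\<dots> \<le> norm (P n + Qv n) + norm (Qv n)" by (rule norm_triangle_ineq4)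
    finally show ?thesis using normPQ[of n] normQ[of n] by simp
  qed
  define K2 where "K2 = cball x0 (2*R0) \<times> cball (0::real^'n) (R + 2*R0)"
  have uc: "uniformly_continuous_on K2 (\<lambda>(x, p). F j x p)"
    unfolding K2_def
    by (intro compact_uniformly_continuous continuous_on_subset[OF Fcont] compact_Times compact_cball) auto
  have K2a: "(X n, P n + Qv n) \<in> K2" for n
    using XY(1)[of n] normPQ[of n] R0 unfolding K2_def mem_Times_iff mem_cball_0
    by (auto simp: dist_norm)
  have K2b: "(Y n, P n) \<in> K2" for n
    using XY(2)[of n] normP[of n] unfolding K2_def by auto
  define L where "L k = \<mu> * u x0 $ k - v x0 $ k" for k
  have LM: "L j = M" "\<And>k. L k \<le> M" unfolding L_def M_def using mx by auto
  have Qv0: "((\<lambda>n. Qv (r n)) \<longlongrightarrow> 0) sequentially"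
  proof -
    have "((\<lambda>n. 2 *\<^sub>R (X' n - x0)) \<longlongrightarrow> 2 *\<^sub>R (x0 - x0)) sequentially"
      by (intro tendsto_intros X'x0)
    then show ?thesis unfolding Qv_def X'_def by simp
  qed
  have evF: "eventually (\<lambda>n. F j (X' n) (P (r n) + Qv (r n)) - F j (Y' n) (P (r n)) > - e) sequentially"
    if e: "e > 0" for e
  proof -
    obtain dd where dd: "dd > 0" "\<forall>a\<in>K2. \<forall>b\<in>K2. dist b a < dd \<longrightarrow> dist ((\<lambda>(x, p). F j x p) b) ((\<lambda>(x, p). F j x p) a) < e"
      using uc e unfolding uniformly_continuous_on_def by metis
    have dd2: "dd / 2 > 0" using dd by simp
    have ev1: "eventually (\<lambda>n. dist (X' n - Y' n) 0 < dd / 2) sequentially"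
      using tendstoD[OF XY0 dd2] by simp
    have ev2: "eventually (\<lambda>n. dist (Qv (r n)) 0 < dd / 2) sequentially"
      using tendstoD[OF Qv0 dd2] by simp
    show ?thesis using ev1 ev2
    proof eventually_elim
      case (elim n)
      have a1: "dist (Y' n) (X' n) < dd / 2" using elim(1) by (simp add: dist_norm norm_minus_commute)
      have a2: "dist (P (r n)) (P (r n) + Qv (r n)) < dd / 2" using elim(2) by (simp add: dist_norm)
      have "dist (Y' n, P (r n)) (X' n, P (r n) + Qv (r n))
          = sqrt ((dist (Y' n) (X' n))\<^sup>2 + (dist (P (r n)) (P (r n) + Qv (r n)))\<^sup>2)"
        by (rule dist_Pair_Pair)
      also have "\<dots> \<le> \<bar>dist (Y' n) (X' n)\<bar> + \<bar>dist (P (r n)) (P (r n) + Qv (r n))\<bar>"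
        by (rule sqrt_sum_squares_le_sum_abs)
      finally have "dist (Y' n, P (r n)) (X' n, P (r n) + Qv (r n)) < dd" using a1 a2 by simp
      then have "dist (F j (Y' n) (P (r n))) (F j (X' n) (P (r n) + Qv (r n))) < e"
        using dd(2) K2a[of "r n"] K2b[of "r n"] unfolding X'_def Y'_def by fastforce
      then show ?case by (simp add: dist_real_def)
    qed
  qed
  have evf: "eventually (\<lambda>n. f j (Y' n) - \<mu> * f j (X' n) > (1 - \<mu>) * f j x0 - e) sequentially"
    if e: "e > 0" for e
  proof -
    have ic: "isCont (f j) x0" using fcont[of j] continuous_on_eq_continuous_at[of UNIV] by auto
    have "((\<lambda>n. f j (Y' n) - \<mu> * f j (X' n)) \<longlongrightarrow> f j x0 - \<mu> * f j x0) sequentially"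
      by (intro tendsto_intros isCont_tendsto_compose[OF ic] X'x0 Y'x0)
    moreover have "(1 - \<mu>) * f j x0 - e < f j x0 - \<mu> * f j x0" using e by (simp add: algebra_simps)
    ultimately show ?thesis by (rule order_tendstoD(1))
  qed
  have evk: "eventually (\<lambda>n. \<mu> * d j k (X' n) * u (X' n) $ k - d j k (Y' n) * v (Y' n) $ k > d j k x0 * L k - e) sequentially"
    if e: "e > 0" for e k
  proof -
    have ic: "isCont (d j k) x0" using dcont[of j k] continuous_on_eq_continuous_at[of UNIV] by auto
    have dX: "((\<lambda>n. d j k (X' n)) \<longlongrightarrow> d j k x0) sequentially"
      by (intro isCont_tendsto_compose[OF ic] X'x0)
    have dY: "((\<lambda>n. d j k (Y' n)) \<longlongrightarrow> d j k x0) sequentially"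
      by (intro isCont_tendsto_compose[OF ic] Y'x0)
    have "((\<lambda>n. (d j k (X' n) - d j k (Y' n)) * B) \<longlongrightarrow> (d j k x0 - d j k x0) * B) sequentially"
      by (intro tendsto_intros dX dY)
    then have lim0: "((\<lambda>n. (d j k (X' n) - d j k (Y' n)) * B) \<longlongrightarrow> 0) sequentially" by simp
    have ev2: "eventually (\<lambda>n. dist ((d j k (X' n) - d j k (Y' n)) * B) 0 < e / 4) sequentially"
      using tendstoD[OF lim0, of "e/4"] e by simp
    have ev2': "eventually (\<lambda>n. (d j k (X' n) - d j k (Y' n)) * v (Y' n) $ k > - e / 4) sequentially"
      using ev2
    proof eventually_elim
      case (elim n)
      have "\<bar>(d j k (X' n) - d j k (Y' n)) * v (Y' n) $ k\<bar> \<le> \<bar>d j k (X' n) - d j k (Y' n)\<bar> * B"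
        by (simp add: abs_mult mult_left_mono Bv')
      also have "\<dots> < e / 4" using elim B0 by (simp add: dist_real_def abs_mult)
      finally show ?case by linarith
    qed
    have ident: "\<mu> * d j k (X' n) * u (X' n) $ k - d j k (Y' n) * v (Y' n) $ k
       = d j k (X' n) * (\<mu> * u (X' n) $ k - v (Y' n) $ k) + (d j k (X' n) - d j k (Y' n)) * v (Y' n) $ k" for n
      by (simp add: algebra_simps)
    have ev1: "eventually (\<lambda>n. d j k (X' n) * (\<mu> * u (X' n) $ k - v (Y' n) $ k) > d j k x0 * L k - 3 * e / 4) sequentially"
    proof (cases "k = j")
      case True
      have "((\<lambda>n. d j k (X' n) * M) \<longlongrightarrow> d j k x0 * M) sequentially" by (intro tendsto_intros dX)
      then have ev: "eventually (\<lambda>n. d j k (X' n) * M > d j k x0 * M - 3 * e / 4) sequentially"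
        using e by (intro order_tendstoD(1)) auto
      show ?thesis using ev
      proof eventually_elim
        case (elim n)
        have "M \<le> \<mu> * u (X' n) $ k - v (Y' n) $ k"
          using A1'[of n] inner_ge_zero[of "X' n - x0"] unfolding True by linarith
        then have "d j k (X' n) * M \<le> d j k (X' n) * (\<mu> * u (X' n) $ k - v (Y' n) $ k)"
          using True diag[of j "X' n"] by (intro mult_left_mono) auto
        then show ?case using elim LM(1) True by simp
      qed
    next
      case False
      define \<delta> where "\<delta> = e / (4 * (\<bar>d j k x0\<bar> + 1))"
      have \<delta>: "\<delta> > 0" unfolding \<delta>_def using e by (simp add: add_pos_nonneg)
      have \<delta>2: "\<bar>d j k x0\<bar> * (2 * \<delta>) \<le> e / 2"
      proof -
        have "\<bar>d j k x0\<bar> * (2 * \<delta>) = e / 2 * (\<bar>d j k x0\<bar> / (\<bar>d j k x0\<bar> + 1))"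
          unfolding \<delta>_def by (simp add: field_simps)
        also have "\<dots> \<le> e / 2 * 1" using e by (intro mult_left_mono) auto
        finally show ?thesis by simp
      qed
      have evu: "eventually (\<lambda>n. u (X' n) $ k < u x0 $ k + \<delta>) sequentially"
        using usc_ev[OF usub X'x0 \<delta>] by simp
      have evv: "eventually (\<lambda>n. v x0 $ k - \<delta> < v (Y' n) $ k) sequentially"
        using lsc_ev[OF vsup Y'x0 \<delta>] by simp
      have "((\<lambda>n. d j k (X' n) * (L k + 2 * \<delta>)) \<longlongrightarrow> d j k x0 * (L k + 2 * \<delta>)) sequentially"
        by (intro tendsto_intros dX)
      then have evd: "eventually (\<lambda>n. d j k (X' n) * (L k + 2 * \<delta>) > d j k x0 * (L k + 2 * \<delta>) - e / 4) sequentially"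
        using e by (intro order_tendstoD(1)) auto
      show ?thesis using evu evv evd
      proof eventually_elim
        case (elim n)
        have "\<mu> * u (X' n) $ k \<le> \<mu> * u x0 $ k + \<delta>" using muu[OF elim(1) \<delta>] .
        then have le: "\<mu> * u (X' n) $ k - v (Y' n) $ k \<le> L k + 2 * \<delta>" using elim(2) unfolding L_def by linarith
        have "d j k (X' n) * (L k + 2 * \<delta>) \<le> d j k (X' n) * (\<mu> * u (X' n) $ k - v (Y' n) $ k)"
          using off[OF False[symmetric], of "X' n"] le by (intro mult_left_mono_neg) auto
        moreover have "d j k x0 * (2 * \<delta>) \<ge> - (e / 2)"
          using \<delta>2 abs_le_iff[of "d j k x0"] \<delta> by (smt (verit) mult_minus_left mult_right_mono)
        ultimately show ?case using elim(3) by (simp add: algebra_simps)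
      qed
    qed
    show ?thesis using ev1 ev2' by eventually_elim (simp add: ident)
  qed
  define T where "T = (\<Sum>k\<in>UNIV. d j k x0 * L k) + (1 - \<mu>) * f j x0"
  have Te: "T \<le> (real CARD('m) + 2) * e" if e: "e > 0" for e
  proof -
    have "eventually (\<lambda>n. F j (X' n) (P (r n) + Qv (r n)) - F j (Y' n) (P (r n)) > - e
        \<and> f j (Y' n) - \<mu> * f j (X' n) > (1 - \<mu>) * f j x0 - e
        \<and> (\<forall>k. \<mu> * d j k (X' n) * u (X' n) $ k - d j k (Y' n) * v (Y' n) $ k > d j k x0 * L k - e)) sequentially"
      using evF[OF e] evf[OF e] eventually_all_finite[of "\<lambda>n k. \<mu> * d j k (X' n) * u (X' n) $ k - d j k (Y' n) * v (Y' n) $ k > d j k x0 * L k - e", OF evk[OF e]]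
      by (simp add: eventually_conj_iff)
    then obtain N where N: "F j (X' N) (P (r N) + Qv (r N)) - F j (Y' N) (P (r N)) > - e"
        "f j (Y' N) - \<mu> * f j (X' N) > (1 - \<mu>) * f j x0 - e"
        "\<And>k. \<mu> * d j k (X' N) * u (X' N) $ k - d j k (Y' N) * v (Y' N) $ k > d j k x0 * L k - e"
      unfolding eventually_sequentially by blast
    have "(\<Sum>k\<in>UNIV. d j k x0 * L k - e) \<le> (\<Sum>k\<in>UNIV. \<mu> * d j k (X' N) * u (X' N) $ k - d j k (Y' N) * v (Y' N) $ k)"
      by (intro sum_mono less_imp_le N(3))
    moreover have "(\<Sum>k\<in>UNIV. d j k x0 * L k - e) = (\<Sum>k\<in>UNIV. d j k x0 * L k) - real CARD('m) * e"
      by (simp add: sum_subtractf)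
    moreover have "F j (X' N) (P (r N) + Qv (r N)) - F j (Y' N) (P (r N)) + (f j (Y' N) - \<mu> * f j (X' N))
      + (\<Sum>k\<in>UNIV. \<mu> * d j k (X' N) * u (X' N) $ k - d j k (Y' N) * v (Y' N) $ k) \<le> 0"
      using E[of "r N"] unfolding X'_def Y'_def .
    ultimately show ?thesis using N(1,2) unfolding T_def by (simp add: algebra_simps)
  qed
  have "T \<le> 0"
  proof (rule field_le_epsilon)
    fix e :: real assume e: "e > 0"
    have "T \<le> (real CARD('m) + 2) * (e / (real CARD('m) + 2))" by (rule Te) (use e in simp)
    then show "T \<le> 0 + e" by simp
  qed
  then show ?thesis unfolding T_def L_def .
qed



lemma per_red:
  fixes x :: "real^'n"
  shows "x - (\<chi> i. of_int \<lfloor>x$i\<rfloor>) \<in> cbox 0 (\<chi> i. 1)"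
    and "periodic g \<Longrightarrow> g (x - (\<chi> i. of_int \<lfloor>x$i\<rfloor>)) = g x"
proof -
  have h: "x $ i - real_of_int \<lfloor>x $ i\<rfloor> \<le> 1" for i by linarith
  show "x - (\<chi> i. of_int \<lfloor>x$i\<rfloor>) \<in> cbox 0 (\<chi> i. 1)"
    unfolding mem_box_cart(2) using h by (simp add: of_int_floor_le)
  assume "periodic g"
  then have pg: "\<forall>y k. g (y + (\<chi> i. of_int (k i))) = g y" unfolding periodic_def .
  have "g ((x - (\<chi> i. of_int \<lfloor>x$i\<rfloor>)) + (\<chi> i. of_int \<lfloor>x$i\<rfloor>)) = g (x - (\<chi> i. of_int \<lfloor>x$i\<rfloor>))"
    using pg[rule_format, of "x - (\<chi> i. of_int \<lfloor>x$i\<rfloor>)" "\<lambda>i. \<lfloor>x$i\<rfloor>"] .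
  then show "g (x - (\<chi> i. of_int \<lfloor>x$i\<rfloor>)) = g x" by simp
qed
theorem theorem3p1:
  fixes F :: "'m::finite \<Rightarrow> real^'n \<Rightarrow> real^'n \<Rightarrow> real"
    and f :: "'m \<Rightarrow> real^'n \<Rightarrow> real"
    and d :: "'m \<Rightarrow> 'm \<Rightarrow> real^'n \<Rightarrow> real"
    and u v :: "real^'n \<Rightarrow> real^'m"
  assumes H3_cont: "\<And>i j. continuous_on UNIV (d i j)"
    and H3_per: "\<And>i j. periodic (d i j)"
    and H3_diag: "\<And>i x. d i i x \<ge> 0"
    and H3_off: "\<And>i j x. i \<noteq> j \<Longrightarrow> d i j x \<le> 0"
    and H3_rowsum: "\<And>i x. (\<Sum>j\<in>UNIV. d i j x) \<ge> 0"
    and H0_f: "\<And>i. continuous_on UNIV (f i)" "\<And>i. periodic (f i)"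
    and H0_F: "\<And>i. continuous_on UNIV (\<lambda>(x, p). F i x p)"
      "\<And>i p. periodic (\<lambda>x. F i x p)"
    and H1_convex: "\<And>i x. convex_on UNIV (F i x)"
    and H1_coercive: "\<And>i M. \<exists>R. \<forall>x p. norm p \<ge> R \<longrightarrow> F i x p \<ge> M"
    and H1_zero: "\<And>i x. F i x 0 = 0"
    and H1_nonneg: "\<And>i x p. F i x p \<ge> F i x 0"
    and H2: "\<And>i x. f i x \<ge> 0"
    and u_per: "periodic u" and u_bdd: "bounded (range u)"
    and v_per: "periodic v" and v_bdd: "bounded (range v)"
    and u_sub: "visc_subsol F f d u"
    and v_super: "visc_supersol F f d v"
    and cases:
      "(\<forall>i x. (\<Sum>j\<in>UNIV. d i j x) > 0) \<or>
       ((\<forall>x. irreducible_at d x) \<and>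
        (\<exists>\<Lambda> :: real^'n \<Rightarrow> real^'m.
           (\<forall>x\<in>setA f d. (\<forall>i. \<Lambda> x $ i \<ge> 0) \<and> (\<Sum>i\<in>UNIV. \<Lambda> x $ i) > 0 \<and>
              (\<Sum>i\<in>UNIV. \<Lambda> x $ i * u x $ i) \<le> (\<Sum>i\<in>UNIV. \<Lambda> x $ i * v x $ i))))"
  shows "\<forall>x i. u x $ i \<le> v x $ i"
proof -
  obtain Bu where Bu: "\<And>x. norm (u x) \<le> Bu" using u_bdd unfolding bounded_iff by auto
  define B where "B = max 0 Bu"
  have B0: "B \<ge> 0" unfolding B_def by simp
  have Bu': "\<bar>u x $ k\<bar> \<le> B" for x k
    using component_le_norm_cart[of "u x" k] Bu[of x] unfolding B_def by linarith
  have usub: "usc (\<lambda>x. u x $ k)" for k using u_sub unfolding visc_subsol_def by blast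
  have vsup: "lsc (\<lambda>x. v x $ k)" for k using v_super unfolding visc_supersol_def by blast
  have step: "\<mu> * u x $ k - v x $ k \<le> (1 - \<mu>) * B" if mu: "0 < \<mu>" "\<mu> < 1" for \<mu> x k
  proof -
    define g where "g k x = \<mu> * u x $ k - v x $ k" for k x
    define K where "K = cbox (0::real^'n) (\<chi> i. 1)"
    have Kc: "compact K" "K \<noteq> {}" unfolding K_def using per_red(1)[of 0] by auto
    have red: "g k (x - (\<chi> i. of_int \<lfloor>x$i\<rfloor>)) = g k x" for k x
      unfolding g_def using per_red(2)[OF u_per, of x] per_red(2)[OF v_per, of x] by simp
    have maxk: "\<exists>y\<in>K. \<forall>z\<in>K. g k z \<le> g k y" for k
    proof (rule usc_max[OF Kc])
      show "\<forall>x\<in>K. \<forall>e>0. \<exists>dd>0. \<forall>y\<in>K. dist y x < dd \<longrightarrow> g k y < g k x + e"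
      proof (intro ballI allI impI)
        fix x and e :: real assume "x \<in> K" "e > 0"
        then have e2: "e / 2 > 0" by simp
        obtain d1 where d1: "d1>0" "\<forall>y. dist y x < d1 \<longrightarrow> u y $ k < u x $ k + e/2"
          using usub[of k] e2 unfolding usc_def by blast
        obtain d2 where d2: "d2>0" "\<forall>y. dist y x < d2 \<longrightarrow> v x $ k - e/2 < v y $ k"
          using vsup[of k] e2 unfolding lsc_def by blast
        show "\<exists>dd>0. \<forall>y\<in>K. dist y x < dd \<longrightarrow> g k y < g k x + e"
        proof (intro exI[of _ "min d1 d2"] conjI ballI impI)
          show "min d1 d2 > 0" using d1 d2 by simp
          fix y assume "y \<in> K" "dist y x < min d1 d2"
          then have h1: "u y $ k < u x $ k + e/2" and h2: "v x $ k - e/2 < v y $ k" using d1 d2 by auto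
          have "\<mu> * u y $ k \<le> \<mu> * (u x $ k + e/2)" using h1 mu by (intro mult_left_mono) auto
          also have "\<dots> \<le> \<mu> * u x $ k + e/2" using mu e2 by (simp add: algebra_simps mult_left_le_one_le)
          finally show "g k y < g k x + e" unfolding g_def using h2 by linarith
        qed
      qed
    qed
    then obtain xs where xs: "\<And>k. xs k \<in> K" "\<And>k z. z \<in> K \<Longrightarrow> g k z \<le> g k (xs k)" by metis
    define m where "m = Max (range (\<lambda>k. g k (xs k)))"
    have "m \<in> range (\<lambda>k. g k (xs k))" unfolding m_def by (intro Max_in) auto
    then obtain j where j: "m = g j (xs j)" by auto
    have jmax: "g k (xs k) \<le> g j (xs j)" for k unfolding j[symmetric] m_def by (intro Max_ge) auto
    define x0 where "x0 = xs j"
    have mx: "g k x \<le> g j x0" for k x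
    proof -
      have "g k x = g k (x - (\<chi> i. of_int \<lfloor>x$i\<rfloor>))" using red by simp
      also have "\<dots> \<le> g k (xs k)" using xs(2) per_red(1)[of x] unfolding K_def by blast
      also have "\<dots> \<le> g j x0" using jmax unfolding x0_def .
      finally show ?thesis .
    qed
    have keyj: "(\<Sum>l\<in>UNIV. d i l x0 * g l x0) + (1 - \<mu>) * f i x0 \<le> 0" if "g i x0 = g j x0" for i
      using key[OF H3_cont H3_diag H3_off H0_f(1) H0_F(1) H1_convex H1_coercive H1_zero u_bdd v_bdd
          u_sub v_super, of \<mu> x0 i] mu mx that unfolding g_def by force
    define M where "M = g j x0"
    have decomp: "(\<Sum>l\<in>UNIV. d i l x0 * g l x0) = (\<Sum>l\<in>UNIV. d i l x0) * M + (\<Sum>l\<in>UNIV. (- d i l x0) * (M - g l x0))" for i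
    proof -
      have "(\<Sum>l\<in>UNIV. (- d i l x0) * (M - g l x0)) = (\<Sum>l\<in>UNIV. d i l x0 * g l x0 - d i l x0 * M)"
        by (intro sum.cong) (auto simp: algebra_simps)
      also have "\<dots> = (\<Sum>l\<in>UNIV. d i l x0 * g l x0) - (\<Sum>l\<in>UNIV. d i l x0) * M"
        by (simp add: sum_subtractf sum_distrib_right)
      finally show ?thesis by simp
    qed
    have nn: "(- d i l x0) * (M - g l x0) \<ge> 0" if "g i x0 = M" for i l
    proof (cases "l = i")
      case True then show ?thesis using that by simp
    next
      case False
      then have "- d i l x0 \<ge> 0" using H3_off[of i l x0] by simp
      moreover have "M - g l x0 \<ge> 0" using mx[of l x0] unfolding M_def by simp
      ultimately show ?thesis by (rule mult_nonneg_nonneg)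
    qed
    have pieces: "(\<Sum>l\<in>UNIV. d i l x0) * M \<le> 0 \<and> (1 - \<mu>) * f i x0 = 0
        \<and> (\<Sum>l\<in>UNIV. (- d i l x0) * (M - g l x0)) = 0" if Mp: "M \<ge> 0" and gi: "g i x0 = M" for i
    proof -
      have s1: "(\<Sum>l\<in>UNIV. (- d i l x0) * (M - g l x0)) \<ge> 0" using nn[OF gi] by (intro sum_nonneg) auto
      have s2: "(1 - \<mu>) * f i x0 \<ge> 0" using mu H2[of i x0] by simp
      have s3: "(\<Sum>l\<in>UNIV. d i l x0) * M \<ge> 0" using H3_rowsum[of i x0] Mp by simp
      have "(\<Sum>l\<in>UNIV. d i l x0) * M + (\<Sum>l\<in>UNIV. (- d i l x0) * (M - g l x0)) + (1 - \<mu>) * f i x0 \<le> 0"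
        using keyj[of i] gi decomp[of i] unfolding M_def by simp
      then show ?thesis using s1 s2 s3 by linarith
    qed
    have "M \<le> (1 - \<mu>) * B"
    proof (rule ccontr)
      assume Mbig: "\<not> M \<le> (1 - \<mu>) * B"
      then have Mpos: "M > 0" using mu B0 by (smt (verit) mult_nonneg_nonneg)
      show False
        using cases
      proof
        assume "\<forall>i x. (\<Sum>j\<in>UNIV. d i j x) > 0"
        then have "(\<Sum>l\<in>UNIV. d j l x0) * M > 0" using Mpos by simp
        then show False using pieces[of j] Mpos unfolding M_def by simp
      next
        assume ii: "(\<forall>x. irreducible_at d x) \<and>
          (\<exists>\<Lambda> :: real^'n \<Rightarrow> real^'m.
           (\<forall>x\<in>setA f d. (\<forall>i. \<Lambda> x $ i \<ge> 0) \<and> (\<Sum>i\<in>UNIV. \<Lambda> x $ i) > 0 \<and>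
              (\<Sum>i\<in>UNIV. \<Lambda> x $ i * u x $ i) \<le> (\<Sum>i\<in>UNIV. \<Lambda> x $ i * v x $ i)))"
        define I where "I = {i. g i x0 = M}"
        have propI: "(\<Sum>l\<in>UNIV. d i l x0) = 0 \<and> f i x0 = 0 \<and> (\<forall>l. d i l x0 \<noteq> 0 \<longrightarrow> l \<in> I)" if "i \<in> I" for i
        proof -
          have gi: "g i x0 = M" using that unfolding I_def by simp
          have P: "(\<Sum>l\<in>UNIV. d i l x0) * M \<le> 0" "(1 - \<mu>) * f i x0 = 0"
             "(\<Sum>l\<in>UNIV. (- d i l x0) * (M - g l x0)) = 0"
            using pieces[OF _ gi] Mpos by auto
          have r: "(\<Sum>l\<in>UNIV. d i l x0) = 0" using P(1) Mpos H3_rowsum[of i x0]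
            by (smt (verit) mult_pos_pos)
          have fz: "f i x0 = 0" using P(2) mu by simp
          have "\<forall>l\<in>UNIV. (- d i l x0) * (M - g l x0) = 0"
            using P(3) nn[OF gi] by (subst sum_nonneg_eq_0_iff[symmetric]) auto
          then have "\<forall>l. d i l x0 \<noteq> 0 \<longrightarrow> l \<in> I" unfolding I_def by auto
          then show ?thesis using r fz by simp
        qed
        have IU: "I = UNIV"
        proof (rule ccontr)
          assume "I \<noteq> UNIV"
          moreover have "I \<noteq> {}" using M_def unfolding I_def by auto
          ultimately obtain i l where "i \<in> I" "l \<notin> I" "d i l x0 \<noteq> 0"
            using ii unfolding irreducible_at_def by blast
          then show False using propI by blast
        qed
        have x0A: "x0 \<in> setA f d"
          unfolding setA_def setF_def setD_def using propI IU by auto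
        obtain \<Lambda> where \<Lambda>: "\<forall>i. \<Lambda> x0 $ i \<ge> 0" "(\<Sum>i\<in>UNIV. \<Lambda> x0 $ i) > 0"
            "(\<Sum>i\<in>UNIV. \<Lambda> x0 $ i * u x0 $ i) \<le> (\<Sum>i\<in>UNIV. \<Lambda> x0 $ i * v x0 $ i)"
          using ii x0A by blast
        have vi: "v x0 $ i = \<mu> * u x0 $ i - M" for i
        proof -
          have "i \<in> I" using IU by simp
          then have "g i x0 = M" unfolding I_def by simp
          then show ?thesis unfolding g_def by linarith
        qed
        have "(\<Sum>i\<in>UNIV. \<Lambda> x0 $ i * v x0 $ i) = \<mu> * (\<Sum>i\<in>UNIV. \<Lambda> x0 $ i * u x0 $ i) - M * (\<Sum>i\<in>UNIV. \<Lambda> x0 $ i)"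
          unfolding vi by (simp add: algebra_simps sum_subtractf sum_distrib_left sum_distrib_right)
        then have A: "M * (\<Sum>i\<in>UNIV. \<Lambda> x0 $ i) \<le> (1 - \<mu>) * (- (\<Sum>i\<in>UNIV. \<Lambda> x0 $ i * u x0 $ i))"
          using \<Lambda>(3) by (simp add: algebra_simps)
        have "- (\<Sum>i\<in>UNIV. \<Lambda> x0 $ i * u x0 $ i) \<le> (\<Sum>i\<in>UNIV. \<Lambda> x0 $ i * B)"
        proof -
          have "- (\<Sum>i\<in>UNIV. \<Lambda> x0 $ i * u x0 $ i) = (\<Sum>i\<in>UNIV. \<Lambda> x0 $ i * (- u x0 $ i))"
            by (simp add: sum_negf)
          also have "\<dots> \<le> (\<Sum>i\<in>UNIV. \<Lambda> x0 $ i * B)"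
            using \<Lambda>(1) Bu' by (intro sum_mono mult_left_mono) (auto simp: abs_le_iff)
          finally show ?thesis .
        qed
        then have "(1 - \<mu>) * (- (\<Sum>i\<in>UNIV. \<Lambda> x0 $ i * u x0 $ i)) \<le> (1 - \<mu>) * (B * (\<Sum>i\<in>UNIV. \<Lambda> x0 $ i))"
          using mu by (intro mult_left_mono) (auto simp: sum_distrib_left mult.commute)
        with A have "M * (\<Sum>i\<in>UNIV. \<Lambda> x0 $ i) \<le> ((1 - \<mu>) * B) * (\<Sum>i\<in>UNIV. \<Lambda> x0 $ i)"
          by (simp add: algebra_simps)
        then have "M \<le> (1 - \<mu>) * B" using \<Lambda>(2) by simp
        then show False using Mbig by simp
      qed
    qed
    then show ?thesis using mx[of k x] unfolding M_def g_def by simp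
  qed
  show ?thesis
  proof (intro allI)
    fix x k
    show "u x $ k \<le> v x $ k"
    proof (rule field_le_epsilon)
      fix e :: real assume e: "e > 0"
      define t where "t = min (1/2) (e / (2 * B + 1))"
      have t: "0 < t" "t < 1" "t \<le> e / (2 * B + 1)" unfolding t_def using e B0 by auto
      have "(1 - t) * u x $ k - v x $ k \<le> (1 - (1 - t)) * B" using step[of "1 - t" x k] t by simp
      then have "u x $ k - v x $ k \<le> t * B + t * u x $ k" by (simp add: algebra_simps)
      also have "\<dots> \<le> t * B + t * B" using Bu'[of x k] t by (intro add_left_mono mult_left_mono) auto
      also have "\<dots> = t * (2 * B)" by simp
      also have "\<dots> \<le> e / (2 * B + 1) * (2 * B)" using t B0 by (intro mult_right_mono) auto
      also have "\<dots> \<le> e" using e B0 by (simp add: field_simps)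
      finally show "u x $ k \<le> v x $ k + e" by simp
    qed
  qed
qed


end
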